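(* Let $(X,d)$ be an $F$-space with non-decreasing metric $d$, and let $\{X_n\}$ be a nontrivial linear approximation scheme on $X$ with $\dim X_n<\infty$ for all $n$. Writing $\|x\|=d(x,0)$, if $$R_{\|\cdot\|}\Big(\bigcup_n X_n\Big)>0,$$ then $\inf_n E(X,X_n)>0$ and $\{X_n\}$ satisfies Shapiro's theorem on $X$.
   Context: An $F$-space is a complete metric vector space with translation-invariant metric $d$. The metric is non-decreasing if $d(\alpha x,0)\le d(x,0)$ for $0\le\alpha\le1$. A nontrivial linear approximation scheme is a chain $X_0\subsetneq X_1\subsetneq\cdots\subsetneq X$ of linear subspaces (strict inclusions) with $\bigcup_nX_n$ dense in $X$. For a linear subspace $V\subseteq X$, its radius is $R_{\|\cdot\|}(V)=\inf_{v\in V\setminus\{0\}}\sup_{t>0}\|tv\|$ (possibly $+\infty$). $E(x,A)=\inf_{a\in A}d(x,a)$ and $E(X,A)=\sup_{x\in X}E(x,A)$. $\{X_n\}$ satisfies Shapiro's theorem on $X$ if for every non-increasing sequence $\{\varepsilon_n\}$ of nonnegative reals tending to $0$ there exists $x\in X$ with $E(x,X_n)\neq\mathbf{O}(\varepsilon_n)$. *)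

theory Defs
  imports "HOL-Analysis.Analysis" "HOL-Library.Landau_Symbols"
begin

definition metric_vector_space :: "('a::real_vector \<Rightarrow> 'a \<Rightarrow> real) \<Rightarrow> bool" where
  "metric_vector_space d \<longleftrightarrow>
     (\<forall>x y. d x y = 0 \<longleftrightarrow> x = y) \<and>
     (\<forall>x y. d x y = d y x) \<and>
     (\<forall>x y z. d x z \<le> d x y + d y z) \<and>
     (\<forall>x y z. d (x + z) (y + z) = d x y) \<and>
     (\<forall>s t x y. (\<lambda>n. d (s n) x) \<longlonglongrightarrow> 0 \<and> (\<lambda>n. d (t n) y) \<longlonglongrightarrow> 0
        \<longrightarrow> (\<lambda>n. d (s n + t n) (x + y)) \<longlonglongrightarrow> 0) \<and>
     (\<forall>a s c x. a \<longlonglongrightarrow> c \<and> (\<lambda>n. d (s n) x) \<longlonglongrightarrow> 0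
        \<longrightarrow> (\<lambda>n. d (a n *\<^sub>R s n) (c *\<^sub>R x)) \<longlonglongrightarrow> 0)"

definition F_space :: "('a::real_vector \<Rightarrow> 'a \<Rightarrow> real) \<Rightarrow> bool" where
  "F_space d \<longleftrightarrow> metric_vector_space d \<and>
     (\<forall>s::nat \<Rightarrow> 'a. (\<forall>e>0. \<exists>N. \<forall>m\<ge>N. \<forall>n\<ge>N. d (s m) (s n) < e)
        \<longrightarrow> (\<exists>l. (\<lambda>n. d (s n) l) \<longlonglongrightarrow> 0))"

definition nondecreasing_metric :: "('a::real_vector \<Rightarrow> 'a \<Rightarrow> real) \<Rightarrow> bool" where
  "nondecreasing_metric d \<longleftrightarrow> (\<forall>x \<alpha>. 0 \<le> \<alpha> \<and> \<alpha> \<le> 1 \<longrightarrow> d (\<alpha> *\<^sub>R x) 0 \<le> d x 0)"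

definition nontrivial_linear_approx_scheme ::
  "('a::real_vector \<Rightarrow> 'a \<Rightarrow> real) \<Rightarrow> (nat \<Rightarrow> 'a set) \<Rightarrow> bool" where
  "nontrivial_linear_approx_scheme d X \<longleftrightarrow>
     (\<forall>n. subspace (X n)) \<and> (\<forall>n. X n \<subset> X (Suc n)) \<and>
     (\<forall>x. \<forall>e>0. \<exists>y\<in>(\<Union>n. X n). d x y < e)"

definition radius :: "('a::real_vector \<Rightarrow> real) \<Rightarrow> 'a set \<Rightarrow> ereal" where
  "radius nrm V = (INF v\<in>V - {0}. SUP t\<in>{0<..}. ereal (nrm (t *\<^sub>R v)))"

definition Edist :: "('a \<Rightarrow> 'a \<Rightarrow> real) \<Rightarrow> 'a \<Rightarrow> 'a set \<Rightarrow> real" where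
  "Edist d x A = (INF a\<in>A. d x a)"

definition Edist_space :: "('a \<Rightarrow> 'a \<Rightarrow> real) \<Rightarrow> 'a set \<Rightarrow> ereal" where
  "Edist_space d A = (SUP x\<in>UNIV. ereal (Edist d x A))"

definition satisfies_Shapiro :: "('a \<Rightarrow> 'a \<Rightarrow> real) \<Rightarrow> (nat \<Rightarrow> 'a set) \<Rightarrow> bool" where
  "satisfies_Shapiro d X \<longleftrightarrow>
     (\<forall>eps::nat \<Rightarrow> real. decseq eps \<and> (\<forall>n. 0 \<le> eps n) \<and> eps \<longlonglongrightarrow> 0 \<longrightarrow>
        (\<exists>x. (\<lambda>n. Edist d x (X n)) \<notin> O(eps)))"

end

theory Submission
  imports Defs
begin


locale fsp =
  fixes d :: "'a::real_vector \<Rightarrow> 'a \<Rightarrow> real"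
  assumes F: "F_space d" and ND: "nondecreasing_metric d"
begin

lemma mvs: "metric_vector_space d" using F unfolding F_space_def by blast

lemma dzero[simp]: "d x y = 0 \<longleftrightarrow> x = y" using mvs unfolding metric_vector_space_def by blast
lemma dsym: "d x y = d y x" using mvs unfolding metric_vector_space_def by blast
lemma dtri: "d x z \<le> d x y + d y z" using mvs unfolding metric_vector_space_def by blast
lemma dtrans: "d (x + z) (y + z) = d x y" using mvs unfolding metric_vector_space_def by blast
lemma dself[simp]: "d x x = 0" by simp
lemma dnonneg[simp]: "0 \<le> d x y"
proof -
  have "d x x \<le> d x y + d y x" by (rule dtri)
  then show ?thesis using dsym[of x y] by simp
qed

lemma dnorm: "d x y = d (x - y) 0"
  using dtrans[of "x - y" y 0] by simp

lemma dneg: "d (- x) 0 = d x 0"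
  using dtrans[of "-x" x 0] dsym[of 0 x] by simp

lemma dtrans2: "d (z + x) (z + y) = d x y"
  using dtrans[of x z y] by (simp add: add.commute)

lemma dmono: assumes "0 \<le> s" "s \<le> t" shows "d (s *\<^sub>R x) 0 \<le> d (t *\<^sub>R x) 0"
proof (cases "t = 0")
  case True then show ?thesis using assms by simp
next
  case False
  then have "s *\<^sub>R x = (s / t) *\<^sub>R (t *\<^sub>R x)" by simp
  moreover have "0 \<le> s / t" "s / t \<le> 1" using assms False by auto
  ultimately show ?thesis using ND unfolding nondecreasing_metric_def by metis
qed

lemma add_lim: "(\<lambda>n. d (s n) x) \<longlonglongrightarrow> 0 \<Longrightarrow> (\<lambda>n. d (t n) y) \<longlonglongrightarrow> 0
        \<Longrightarrow> (\<lambda>n. d (s n + t n) (x + y)) \<longlonglongrightarrow> 0"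
  using mvs unfolding metric_vector_space_def by blast

lemma scal_lim: "a \<longlonglongrightarrow> c \<Longrightarrow> (\<lambda>n. d (s n) x) \<longlonglongrightarrow> 0
        \<Longrightarrow> (\<lambda>n. d (a n *\<^sub>R s n) (c *\<^sub>R x)) \<longlonglongrightarrow> 0"
  using mvs unfolding metric_vector_space_def by blast

lemma scal_lim_const: "a \<longlonglongrightarrow> c \<Longrightarrow> (\<lambda>n. d (a n *\<^sub>R x) (c *\<^sub>R x)) \<longlonglongrightarrow> 0"
  using scal_lim[of a c "\<lambda>_. x" x] by simp

lemma sum_lim:
  assumes "finite S" "\<forall>x\<in>S. (\<lambda>n. a n x) \<longlonglongrightarrow> g x"
  shows "(\<lambda>n. d (\<Sum>x\<in>S. a n x *\<^sub>R x) (\<Sum>x\<in>S. g x *\<^sub>R x)) \<longlonglongrightarrow> 0"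
  using assms
proof (induction S rule: finite_induct)
  case empty then show ?case by simp
next
  case (insert y S)
  have 1: "(\<lambda>n. d (a n y *\<^sub>R y) (g y *\<^sub>R y)) \<longlonglongrightarrow> 0"
    using insert.prems by (intro scal_lim_const) auto
  have 2: "(\<lambda>n. d (\<Sum>x\<in>S. a n x *\<^sub>R x) (\<Sum>x\<in>S. g x *\<^sub>R x)) \<longlonglongrightarrow> 0"
    using insert by auto
  show ?case using add_lim[OF 1 2] insert.hyps by simp
qed

lemma norm_lim:
  assumes "(\<lambda>n. d (s n) x) \<longlonglongrightarrow> 0" shows "(\<lambda>n. d (s n) 0) \<longlonglongrightarrow> d x 0"
proof -
  have "(\<lambda>n. d (s n) 0 - d x 0) \<longlonglongrightarrow> 0"
  proof (rule Lim_null_comparison[OF _ assms])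
    show "\<forall>\<^sub>F n in sequentially. norm (d (s n) 0 - d x 0) \<le> d (s n) x"
      proof (intro always_eventually allI)
      fix n
      have "d (s n) 0 \<le> d (s n) x + d x 0" "d x 0 \<le> d x (s n) + d (s n) 0" by (rule dtri)+
      then show "norm (d (s n) 0 - d x 0) \<le> d (s n) x" using dsym[of x "s n"] by simp
    qed
  qed
  then show ?thesis by (rule LIM_zero_cancel)
qed

lemma E_bdd: "bdd_below ((\<lambda>a. d x a) ` A)" by (auto intro: bdd_belowI[of _ 0])

lemma E_le: "a \<in> A \<Longrightarrow> Edist d x A \<le> d x a"
  unfolding Edist_def by (rule cINF_lower[OF E_bdd])

lemma E_ge: "A \<noteq> {} \<Longrightarrow> (\<And>a. a \<in> A \<Longrightarrow> c \<le> d x a) \<Longrightarrow> c \<le> Edist d x A"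
  unfolding Edist_def by (rule cINF_greatest)

lemma E_nonneg: "A \<noteq> {} \<Longrightarrow> 0 \<le> Edist d x A"
  by (rule E_ge) auto

lemma E_less: "A \<noteq> {} \<Longrightarrow> Edist d x A < e \<Longrightarrow> \<exists>a\<in>A. d x a < e"
  unfolding Edist_def using cINF_less_iff[OF _ E_bdd] by blast

lemma E_lip: assumes "A \<noteq> {}" shows "Edist d x A \<le> Edist d y A + d x y"
proof -
  have "Edist d x A - d x y \<le> Edist d y A"
  proof (rule E_ge[OF assms])
    fix a assume "a \<in> A"
    then have "Edist d x A \<le> d x a" by (rule E_le)
    also have "\<dots> \<le> d x y + d y a" by (rule dtri)
    finally show "Edist d x A - d x y \<le> d y a" by simp
  qed
  then show ?thesis by simp
qed

lemma E_diff: assumes "subspace A" shows "Edist d (y - z) A \<le> Edist d y A + Edist d z A"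
proof -
  have ne: "A \<noteq> {}" using assms subspace_0 by blast
  have "Edist d (y - z) A - Edist d z A \<le> Edist d y A"
  proof (rule E_ge[OF ne])
    fix a1 assume a1: "a1 \<in> A"
    have "Edist d (y - z) A - d y a1 \<le> Edist d z A"
    proof (rule E_ge[OF ne])
      fix a2 assume a2: "a2 \<in> A"
      have "Edist d (y - z) A \<le> d (y - z) (a1 - a2)"
        using a1 a2 assms by (intro E_le) (simp add: subspace_diff)
      also have "\<dots> = d ((y - a1) + (a2 - z)) 0" by (subst dnorm) (simp add: algebra_simps)
      also have "\<dots> \<le> d ((y - a1) + (a2 - z)) (0 + (a2 - z)) + d (a2 - z) 0"
        using dtri by simp
      also have "\<dots> = d (y - a1) 0 + d (- (a2 - z)) 0" by (simp only: dtrans dneg)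
      also have "\<dots> = d y a1 + d z a2"
        using dnorm[of y a1] dnorm[of z a2] by simp
      finally show "Edist d (y - z) A - d y a1 \<le> d z a2" by simp
    qed
    then show "Edist d (y - z) A - Edist d z A \<le> d y a1" by simp
  qed
  then show ?thesis by simp
qed

end

lemma finite_subseq:
  fixes f :: "nat \<Rightarrow> 'b \<Rightarrow> real"
  assumes "finite S" "\<And>k x. x \<in> S \<Longrightarrow> \<bar>f k x\<bar> \<le> B"
  shows "\<exists>r. strict_mono r \<and> (\<forall>x\<in>S. \<exists>l. (\<lambda>k. f (r k) x) \<longlonglongrightarrow> l)"
  using assms
proof (induction S rule: finite_induct)
  case empty then show ?case by (intro exI[of _ id]) (auto simp: strict_mono_def)
next
  case (insert y S)
  then obtain r where r: "strict_mono r" "\<forall>x\<in>S. \<exists>l. (\<lambda>k. f (r k) x) \<longlonglongrightarrow> l" by auto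
  have "seq_compact {-B..B}" by (intro compact_imp_seq_compact compact_Icc)
  moreover have "\<forall>k. f (r k) y \<in> {-B..B}" using insert.prems[of y] by (auto simp: abs_le_iff minus_le_iff)
  ultimately obtain l r' where r': "strict_mono r'" "((\<lambda>k. f (r k) y) \<circ> r') \<longlonglongrightarrow> l"
    by (rule seq_compactE)
  show ?case
  proof (intro exI[of _ "r \<circ> r'"] conjI ballI)
    show "strict_mono (r \<circ> r')" using r r' by (simp add: strict_mono_o)
    fix x assume "x \<in> insert y S"
    then show "\<exists>l. (\<lambda>k. f ((r \<circ> r') k) x) \<longlonglongrightarrow> l"
    proof
      assume "x = y" then show ?thesis using r' by (auto simp: o_def)
    next
      assume "x \<in> S"
      then obtain l where "(\<lambda>k. f (r k) x) \<longlonglongrightarrow> l" using r by auto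
      from LIMSEQ_subseq_LIMSEQ[OF this r'(1)] show ?thesis by (auto simp: o_def)
    qed
  qed
qed



context fsp begin

lemma key:
  assumes C: "finite C" "independent C" and A: "span C = A"
    and v: "v \<notin> A" and W: "span (insert v C) \<subseteq> W"
    and rad: "\<And>u. u \<in> W \<Longrightarrow> u \<noteq> 0 \<Longrightarrow> \<exists>t>0. c < d (t *\<^sub>R u) 0"
  shows "\<exists>k::nat. k \<ge> 1 \<and> (\<forall>b\<in>A. c \<le> d (real k *\<^sub>R v - real k *\<^sub>R b) 0)"
proof (rule ccontr)
  assume "\<not> ?thesis"
  then have "\<forall>k. \<exists>b. k \<ge> 1 \<longrightarrow> b \<in> A \<and> d (real k *\<^sub>R v - real k *\<^sub>R b) 0 < c"
    by (metis not_le not_less_eq_eq le0)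
  then obtain b where b: "\<And>k. k \<ge> 1 \<Longrightarrow> b k \<in> A \<and> d (real k *\<^sub>R v - real k *\<^sub>R b k) 0 < c"
    by metis
  have "\<forall>k. \<exists>\<beta>. b k \<in> A \<longrightarrow> b k = (\<Sum>x\<in>C. \<beta> x *\<^sub>R x)"
    using span_finite[OF C(1)] A by auto
  then obtain \<beta> where \<beta>: "\<And>k. b k \<in> A \<Longrightarrow> b k = (\<Sum>x\<in>C. \<beta> k x *\<^sub>R x)" by metis
  define S where "S = insert v C"
  have vC: "v \<notin> C" using v A span_base by blast
  have finS: "finite S" using C S_def by simp
  have indS: "independent S" unfolding S_def using v A C by (intro independent_insertI) auto
  define \<alpha> where "\<alpha> k x = (if x = v then 1 else - \<beta> k x)" for k x
  define w where "w k = v - b k" for k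
  have w_eq: "w k = (\<Sum>x\<in>S. \<alpha> k x *\<^sub>R x)" if "k \<ge> 1" for k
  proof -
    have "(\<Sum>x\<in>S. \<alpha> k x *\<^sub>R x) = v + (\<Sum>x\<in>C. \<alpha> k x *\<^sub>R x)"
      unfolding S_def using C vC by (simp add: \<alpha>_def)
    also have "(\<Sum>x\<in>C. \<alpha> k x *\<^sub>R x) = - (\<Sum>x\<in>C. \<beta> k x *\<^sub>R x)"
      using vC by (auto simp: \<alpha>_def sum_negf[symmetric] intro!: sum.cong)
    also have "\<dots> = - b k" using \<beta> b that by simp
    finally show ?thesis by (simp add: w_def)
  qed
  define M where "M k = (\<Sum>x\<in>S. \<bar>\<alpha> k x\<bar>)" for k
  have M1: "M k \<ge> 1" for k
  proof -
    have "\<bar>\<alpha> k v\<bar> \<le> M k" unfolding M_def using finS S_def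
      by (intro member_le_sum) auto
    then show ?thesis by (simp add: \<alpha>_def)
  qed
  define \<gamma> where "\<gamma> k x = \<alpha> k x / M k" for k x
  have \<gamma>sum: "(\<Sum>x\<in>S. \<bar>\<gamma> k x\<bar>) = 1" for k
  proof -
    have "(\<Sum>x\<in>S. \<bar>\<gamma> k x\<bar>) = (\<Sum>x\<in>S. \<bar>\<alpha> k x\<bar>) / M k"
      unfolding \<gamma>_def using M1[of k] by (simp add: sum_divide_distrib)
    then show ?thesis using M1[of k] by (simp add: M_def)
  qed
  have \<gamma>b: "\<bar>\<gamma> k x\<bar> \<le> 1" if "x \<in> S" for k x
    using member_le_sum[of x S "\<lambda>x. \<bar>\<gamma> k x\<bar>"] that finS \<gamma>sum[of k] by simp
  obtain r where r: "strict_mono r" "\<forall>x\<in>S. \<exists>l. (\<lambda>k. \<gamma> (r k) x) \<longlonglongrightarrow> l"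
    using finite_subseq[OF finS, of \<gamma> 1] \<gamma>b by blast
  define g where "g x = lim (\<lambda>k. \<gamma> (r k) x)" for x
  have g: "(\<lambda>k. \<gamma> (r k) x) \<longlonglongrightarrow> g x" if "x \<in> S" for x
    using r(2) that unfolding g_def by (metis limI)
  have "(\<lambda>k. \<Sum>x\<in>S. \<bar>\<gamma> (r k) x\<bar>) \<longlonglongrightarrow> (\<Sum>x\<in>S. \<bar>g x\<bar>)"
    by (intro tendsto_sum tendsto_rabs g)
  then have gsum: "(\<Sum>x\<in>S. \<bar>g x\<bar>) = 1" using \<gamma>sum by (simp add: LIMSEQ_const_iff)
  define u where "u = (\<Sum>x\<in>S. g x *\<^sub>R x)"
  have "u \<noteq> 0"
  proof
    assume "u = 0"
    then have "\<forall>x\<in>S. g x = 0" using indS dependent_finite[OF finS] unfolding u_def by blast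
    then show False using gsum by simp
  qed
  moreover have "u \<in> W"
  proof -
    have "u \<in> span S" unfolding u_def by (intro span_sum span_scale span_base)
    then show ?thesis using W S_def by auto
  qed
  ultimately obtain t where t: "t > 0" "c < d (t *\<^sub>R u) 0" using rad by blast
  define j where "j = nat \<lceil>t\<rceil>"
  have tj: "t \<le> real j" "j \<ge> 1" using t unfolding j_def by linarith+
  have "d (t *\<^sub>R u) 0 \<le> d (real j *\<^sub>R u) 0" using t tj by (intro dmono) auto
  have "(\<lambda>k. d (\<Sum>x\<in>S. (real j * \<gamma> (r k) x) *\<^sub>R x) (\<Sum>x\<in>S. (real j * g x) *\<^sub>R x)) \<longlonglongrightarrow> 0"
    using g by (intro sum_lim finS) (auto intro: tendsto_mult)
  then have lim: "(\<lambda>k. d (real j *\<^sub>R (\<Sum>x\<in>S. \<gamma> (r k) x *\<^sub>R x)) 0) \<longlonglongrightarrow> d (real j *\<^sub>R u) 0"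
    unfolding u_def by (intro norm_lim) (simp add: scaleR_sum_right)
  have "d (real j *\<^sub>R (\<Sum>x\<in>S. \<gamma> (r k) x *\<^sub>R x)) 0 \<le> c" if "k \<ge> j" for k
  proof -
    define K where "K = r k"
    have "K \<ge> j" using seq_suble[OF r(1), of k] that K_def by simp
    then have K1: "K \<ge> 1" using tj by simp
    have "(\<Sum>x\<in>S. \<gamma> K x *\<^sub>R x) = (1 / M K) *\<^sub>R w K"
      using w_eq[OF K1] by (simp add: \<gamma>_def scaleR_sum_right divide_inverse mult.commute)
    then have "real j *\<^sub>R (\<Sum>x\<in>S. \<gamma> K x *\<^sub>R x)
        = (real j / (M K * real K)) *\<^sub>R (real K *\<^sub>R v - real K *\<^sub>R b K)"
      using K1 M1[of K] by (simp add: w_def scaleR_diff_right[symmetric])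
    also have "d \<dots> 0 \<le> d (1 *\<^sub>R (real K *\<^sub>R v - real K *\<^sub>R b K)) 0"
    proof (rule dmono)
      have "real j \<le> real K * 1" using \<open>K \<ge> j\<close> by simp
      also have "\<dots> \<le> real K * M K" using M1[of K] by (intro mult_left_mono) auto
      finally show "real j / (M K * real K) \<le> 1" using K1 M1[of K]
        by (simp add: divide_le_eq mult.commute)
    qed (use M1[of K] in auto)
    also have "\<dots> \<le> c" using b[OF K1] by simp
    finally show ?thesis unfolding K_def .
  qed
  then have "d (real j *\<^sub>R u) 0 \<le> c" by (intro LIMSEQ_le_const2[OF lim]) blast
  then show False using t \<open>d (t *\<^sub>R u) 0 \<le> d (real j *\<^sub>R u) 0\<close> by simp
qed

end


context fsp begin

lemma complete: "(\<forall>e>0. \<exists>N. \<forall>m\<ge>N. \<forall>n\<ge>N. d (s m) (s n) < e) \<Longrightarrow> \<exists>l. (\<lambda>n. d (s n) l) \<longlonglongrightarrow> 0"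
proof -
  assume H: "\<forall>e>0. \<exists>N. \<forall>m\<ge>N. \<forall>n\<ge>N. d (s m) (s n) < e"
  have "\<forall>s::nat \<Rightarrow> 'a. (\<forall>e>0. \<exists>N. \<forall>m\<ge>N. \<forall>n\<ge>N. d (s m) (s n) < e) \<longrightarrow> (\<exists>l. (\<lambda>n. d (s n) l) \<longlonglongrightarrow> 0)"
    using F unfolding F_space_def by (rule conjunct2)
  then show ?thesis using H by blast
qed

lemma shapiro_part:
  assumes sub: "\<And>n. subspace (X n)"
    and good: "\<And>n. \<exists>y. \<forall>a\<in>X n. c \<le> d y a" and c: "c > 0"
  shows "satisfies_Shapiro d X"
  unfolding satisfies_Shapiro_def
proof (intro allI impI)
  fix eps :: "nat \<Rightarrow> real"
  assume eps: "decseq eps \<and> (\<forall>n. 0 \<le> eps n) \<and> eps \<longlonglongrightarrow> 0"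
  have ne: "X n \<noteq> {}" for n using sub[of n] subspace_0 by blast
  show "\<exists>x. (\<lambda>n. Edist d x (X n)) \<notin> O(eps)"
  proof (rule ccontr)
    assume "\<not> ?thesis"
    then have bo: "(\<lambda>n. Edist d x (X n)) \<in> O(eps)" for x by blast
    interpret M: Metric_space UNIV d by (rule Metric_space.intro) (simp, rule dsym, simp, rule dtri)
    have mc: M.mcomplete
      unfolding M.mcomplete_def M.MCauchy_def
    proof (intro allI impI)
      fix \<sigma> :: "nat \<Rightarrow> 'a"
      assume H: "range \<sigma> \<subseteq> UNIV \<and> (\<forall>\<epsilon>>0. \<exists>N. \<forall>n n'. N \<le> n \<longrightarrow> N \<le> n' \<longrightarrow> d (\<sigma> n) (\<sigma> n') < \<epsilon>)"
      have "\<forall>e>0. \<exists>N. \<forall>m\<ge>N. \<forall>n\<ge>N. d (\<sigma> m) (\<sigma> n) < e"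
      proof (intro allI impI)
        fix e :: real assume "e > 0"
        then obtain N where "\<forall>n n'. N \<le> n \<longrightarrow> N \<le> n' \<longrightarrow> d (\<sigma> n) (\<sigma> n') < e"
          using H by blast
        then show "\<exists>N. \<forall>m\<ge>N. \<forall>n\<ge>N. d (\<sigma> m) (\<sigma> n) < e" by blast
      qed
      then have "\<exists>l. (\<lambda>n. d (\<sigma> n) l) \<longlonglongrightarrow> 0" by (rule complete)
      then obtain l where l: "(\<lambda>n. d (\<sigma> n) l) \<longlonglongrightarrow> 0" by blast
      show "\<exists>x. limitin M.mtopology \<sigma> x sequentially"
        unfolding M.limit_metric_sequentially
      proof (intro exI[of _ l] conjI allI impI)
        fix e :: real assume "e > 0"
        with l obtain N where "\<forall>n\<ge>N. norm (d (\<sigma> n) l - 0) < e" unfolding LIMSEQ_iff by blast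
        then show "\<exists>N. \<forall>n\<ge>N. \<sigma> n \<in> UNIV \<and> d (\<sigma> n) l < e" by auto
      qed simp
    qed
    define G where "G = (\<lambda>(C::nat, N::nat). {x. \<forall>n\<ge>N. Edist d x (X n) \<le> real C * eps n})"
    have closed: "closedin M.mtopology (G p)" for p
      unfolding M.metric_closedin_iff_sequentially_closed
    proof (intro conjI allI impI subset_UNIV)
      fix \<sigma> l assume H: "range \<sigma> \<subseteq> G p \<and> limitin M.mtopology \<sigma> l sequentially"
      obtain C N where p: "p = (C, N)" by force
      show "l \<in> G p" unfolding p G_def
      proof (simp only: case_prod_conv, intro CollectI allI impI)
        fix n assume n: "n \<ge> N"
        show "Edist d l (X n) \<le> real C * eps n"
        proof (rule ccontr)
          assume "\<not> ?thesis"
          then have e: "Edist d l (X n) - real C * eps n > 0" by simp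
          with H obtain K where "d (\<sigma> K) l < Edist d l (X n) - real C * eps n"
            unfolding M.limit_metric_sequentially by blast
          moreover have "Edist d (\<sigma> K) (X n) \<le> real C * eps n"
            using H n unfolding p G_def by auto
          moreover have "Edist d l (X n) \<le> Edist d (\<sigma> K) (X n) + d l (\<sigma> K)" by (rule E_lip[OF ne])
          ultimately show False using dsym[of l "\<sigma> K"] by linarith
        qed
      qed
    qed
    have cover: "(\<Union>p. G p) = UNIV"
    proof (intro set_eqI iffI)
      fix x :: 'a
      obtain K where K: "K > 0" "\<forall>\<^sub>F n in sequentially. norm (Edist d x (X n)) \<le> K * norm (eps n)"
        using bo[of x] by (elim landau_o.bigE)
      then obtain N where N: "\<forall>n\<ge>N. norm (Edist d x (X n)) \<le> K * norm (eps n)"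
        unfolding eventually_sequentially by blast
      have "x \<in> G (nat \<lceil>K\<rceil>, N)" unfolding G_def
      proof (simp only: case_prod_conv, intro CollectI allI impI)
        fix n assume "n \<ge> N"
        then have "Edist d x (X n) \<le> K * eps n" using N eps E_nonneg[OF ne] by simp
        also have "\<dots> \<le> real (nat \<lceil>K\<rceil>) * eps n" using eps by (intro mult_right_mono) (auto, linarith)
        finally show "Edist d x (X n) \<le> real (nat \<lceil>K\<rceil>) * eps n" .
      qed
      then show "x \<in> (\<Union>p. G p)" by blast
    qed simp
    have "\<exists>p. M.mtopology interior_of G p \<noteq> {}"
    proof (rule ccontr)
      assume "\<not> ?thesis"
      then have "M.mtopology interior_of \<Union>(range G) = {}"
        using closed by (intro M.metric_Baire_category_alt[OF mc]) auto
      moreover have "M.mtopology interior_of UNIV = UNIV"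
        using interior_of_topspace[of M.mtopology] unfolding M.topspace_mtopology .
      ultimately show False using cover by (metis UNIV_not_empty)
    qed
    then obtain p x0 where x0: "x0 \<in> M.mtopology interior_of G p" by blast
    obtain C N where p: "p = (C, N)" by force
    have "openin M.mtopology (M.mtopology interior_of G p)" by (rule openin_interior_of)
    then obtain \<rho> where \<rho>: "\<rho> > 0" "M.mball x0 \<rho> \<subseteq> M.mtopology interior_of G p"
      using x0 unfolding M.openin_mtopology by blast
    have "M.mtopology interior_of G p \<subseteq> G p" by (rule interior_of_subset)
    with \<rho> have \<rho>G: "M.mball x0 \<rho> \<subseteq> G (C, N)" unfolding p by blast
    have small: "Edist d z (X n) \<le> 2 * real C * eps n" if "d z 0 < \<rho>" "n \<ge> N" for z n
    proof -
      have "d x0 (x0 + z) = d z 0" using dtrans2[of x0 0 z] dsym[of 0 z] by simp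
      then have "x0 + z \<in> G (C, N)" "x0 \<in> G (C, N)" using \<rho>G that \<rho> by auto
      then have "Edist d (x0 + z) (X n) \<le> real C * eps n" "Edist d x0 (X n) \<le> real C * eps n"
        using that unfolding G_def by auto
      moreover have "Edist d ((x0 + z) - x0) (X n) \<le> Edist d (x0 + z) (X n) + Edist d x0 (X n)"
        by (rule E_diff[OF sub])
      ultimately show ?thesis by simp
    qed
    define \<eta> where "\<eta> = min c \<rho> / 2"
    have \<eta>: "\<eta> > 0" "\<eta> \<le> c" "2 * \<eta> \<le> \<rho>" using c \<rho> unfolding \<eta>_def by auto
    have "(\<lambda>n. 2 * real C * eps n) \<longlonglongrightarrow> 2 * real C * 0" using eps by (intro tendsto_mult) auto
    then obtain N' where N': "\<forall>n\<ge>N'. norm (2 * real C * eps n - 0) < \<eta>"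
      using \<eta> unfolding LIMSEQ_iff by auto
    define n where "n = max N N'"
    have nN: "n \<ge> N" and epsn: "2 * real C * eps n < \<eta>" using N'[rule_format, of n] eps
      unfolding n_def by auto
    obtain y where y: "\<forall>a\<in>X n. c \<le> d y a" using good by blast
    define f where "f t = Edist d (t *\<^sub>R y) (X n)" for t
    have "continuous_on {0..1} f"
    proof (rule continuous_on_sequentiallyI)
      fix u :: "nat \<Rightarrow> real" and a assume "u \<longlonglongrightarrow> a"
      then have lim: "(\<lambda>k. d (u k *\<^sub>R y) (a *\<^sub>R y)) \<longlonglongrightarrow> 0" by (rule scal_lim_const)
      have "(\<lambda>k. f (u k) - f a) \<longlonglongrightarrow> 0"
      proof (rule Lim_null_comparison[OF _ lim], intro always_eventually allI)
        fix k
        have "f (u k) \<le> f a + d (u k *\<^sub>R y) (a *\<^sub>R y)" "f a \<le> f (u k) + d (a *\<^sub>R y) (u k *\<^sub>R y)"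
          unfolding f_def by (rule E_lip[OF ne])+
        then show "norm (f (u k) - f a) \<le> d (u k *\<^sub>R y) (a *\<^sub>R y)" using dsym[of "a *\<^sub>R y"] by simp
      qed
      then show "(\<lambda>k. f (u k)) \<longlonglongrightarrow> f a" by (rule LIM_zero_cancel)
    qed
    moreover have "f 0 \<le> \<eta>"
    proof -
      have "f 0 \<le> d 0 0" unfolding f_def using E_le[of 0 "X n" 0] sub[of n] by (simp add: subspace_0)
      then show ?thesis using \<eta> by simp
    qed
    moreover have "\<eta> \<le> f 1" unfolding f_def using y \<eta> by (intro E_ge[OF ne]) auto
    ultimately obtain t where ft: "f t = \<eta>" using IVT'[of f 0 \<eta> 1] by auto
    then obtain a where a: "a \<in> X n" "d (t *\<^sub>R y) a < 2 * \<eta>"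
      using E_less[OF ne[of n], of "t *\<^sub>R y" "2 * \<eta>"] \<eta> unfolding f_def by auto
    define z where "z = t *\<^sub>R y - a"
    have "d z 0 < \<rho>" using a \<eta> dnorm[of "t *\<^sub>R y" a] unfolding z_def by simp
    then have "Edist d z (X n) < \<eta>" using small[OF _ nN] epsn by fastforce
    moreover have "\<eta> \<le> Edist d z (X n)"
    proof (rule E_ge[OF ne])
      fix a' assume a': "a' \<in> X n"
      have "d z a' = d (t *\<^sub>R y) (a' + a)" unfolding z_def using dtrans[of "t *\<^sub>R y - a" a a'] by simp
      also have "\<dots> \<ge> f t" unfolding f_def using a a' sub[of n] by (intro E_le) (simp add: subspace_add)
      finally show "\<eta> \<le> d z a'" using ft by simp
    qed
    ultimately show False by simp
  qed
qed

end


theorem mainTheorem3: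
  fixes d :: "'a::real_vector \<Rightarrow> 'a \<Rightarrow> real" and X :: "nat \<Rightarrow> 'a set"
  assumes "F_space d"
    and "nondecreasing_metric d"
    and "nontrivial_linear_approx_scheme d X"
    and "\<And>n. \<exists>B. finite B \<and> X n = span B"
    and "radius (\<lambda>x. d x 0) (\<Union>n. X n) > 0"
  shows "(INF n. Edist_space d (X n)) > 0 \<and> satisfies_Shapiro d X"
proof -
  interpret fsp d using assms(1,2) by (rule fsp.intro)
  have sub: "\<And>n. subspace (X n)" and strict: "\<And>n. X n \<subset> X (Suc n)"
    using assms(3) unfolding nontrivial_linear_approx_scheme_def by blast+
  have ne: "X n \<noteq> {}" for n using sub[of n] subspace_0 by blast
  obtain c where c0: "0 < ereal c" and cR: "ereal c < radius (\<lambda>x. d x 0) (\<Union>n. X n)"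
    using ereal_dense2[OF assms(5)] by blast
  have c: "c > 0" using c0 by simp
  have rad: "\<exists>t>0. c < d (t *\<^sub>R u) 0" if "u \<in> (\<Union>n. X n)" "u \<noteq> 0" for u
  proof -
    have "radius (\<lambda>x. d x 0) (\<Union>n. X n) \<le> (SUP t\<in>{0<..}. ereal (d (t *\<^sub>R u) 0))"
      unfolding radius_def using that by (intro INF_lower) auto
    with cR have "ereal c < (SUP t\<in>{0<..}. ereal (d (t *\<^sub>R u) 0))" by order
    then show ?thesis unfolding less_SUP_iff by auto
  qed
  have good: "\<exists>y. \<forall>a\<in>X n. c \<le> d y a" for n
  proof -
    obtain B where B: "finite B" "X n = span B" using assms(4) by blast
    obtain C where C: "C \<subseteq> B" "independent C" "B \<subseteq> span C"
      by (rule maximal_independent_subset)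
    have finC: "finite C" using C B finite_subset by blast
    have spC: "span C = X n"
    proof
      show "span C \<subseteq> X n" using C B span_mono by blast
      show "X n \<subseteq> span C" using C B by (simp add: span_minimal)
    qed
    obtain v where v: "v \<in> X (Suc n)" "v \<notin> X n" using strict[of n] by blast
    have W: "span (insert v C) \<subseteq> X (Suc n)"
    proof (rule span_minimal[OF _ sub])
      have "C \<subseteq> X n" using spC span_superset by blast
      then show "insert v C \<subseteq> X (Suc n)" using v strict[of n] by blast
    qed
    obtain k :: nat where k: "k \<ge> 1" "\<forall>b\<in>X n. c \<le> d (real k *\<^sub>R v - real k *\<^sub>R b) 0"
      using key[OF finC C(2) spC v(2) W, of c] rad by blast
    show ?thesis
    proof (intro exI ballI)
      fix a assume a: "a \<in> X n"
      define b where "b = (1 / real k) *\<^sub>R a"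
      have "b \<in> X n" unfolding b_def using a sub[of n] by (simp add: subspace_scale)
      moreover have "real k *\<^sub>R b = a" using k(1) unfolding b_def by simp
      ultimately have "c \<le> d (real k *\<^sub>R v - a) 0" using k(2) by metis
      then show "c \<le> d (real k *\<^sub>R v) a" using dnorm[of "real k *\<^sub>R v" a] by simp
    qed
  qed
  have "ereal c \<le> (INF n. Edist_space d (X n))"
  proof (rule INF_greatest)
    fix n
    obtain y where y: "\<forall>a\<in>X n. c \<le> d y a" using good by blast
    then have "c \<le> Edist d y (X n)" by (intro E_ge[OF ne]) auto
    then show "ereal c \<le> Edist_space d (X n)"
      unfolding Edist_space_def by (intro SUP_upper2[of y]) auto
  qed
  with c0 have "(INF n. Edist_space d (X n)) > 0" by order
  moreover have "satisfies_Shapiro d X" using shapiro_part[OF sub good c] .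
  ultimately show ?thesis ..
qed

end
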